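(* Let $\alpha\ge4$ and $B>1$. Let $\mathcal{F}=A_n\circ\cdots\circ A_0$ be a deep learning model in which every block $A_i$ is a basic block, i.e. one of: a linear block $A(\mathbf{x})=\mathbf{A}\mathbf{x}+\mathbf{b}$ (approximation $A^\alpha=A$); a ReLU block (coordinatewise $\max(x,0)$, approximated by applying $\tilde r_{\alpha,B}$ coordinatewise); a max-pooling block with kernel size $k_0\le10$ (each output coordinate is the max of a window of $k_0^2$ inputs, approximated by applying $\tilde M_{\alpha,k_0^2,B}$ to each window); or a softmax block $A(\mathbf{x})=(\exp(x_i)/\sum_j\exp(x_j))_i$ (approximation $A^\alpha=A$). Let $\mathcal{F}^\alpha=A_n^\alpha\circ\cdots\circ A_0^\alpha$. Assume that for every input $\mathbf{x}$ considered, $\|\mathbf{x}\|_\infty\le B$ and $\|A_i\circ\cdots\circ A_0(\mathbf{x})\|_\infty\le B$, $\|A_i^\alpha\circ\cdots\circ A_0^\alpha(\mathbf{x})\|_\infty\le B$ for $0\le i\le n-1$. Then there exists a constant $C$, which can be determined independently of $\alpha$, such that $\|\mathcal{F}^\alpha(\mathbf{x})-\mathcal{F}(\mathbf{x})\|_\infty\le C2^{-\alpha}$ for every such input $\mathbf{x}$.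
   Context: Let $p_\alpha$ be a polynomial such that $m_\alpha(a,b)=\frac{(a+b)+(a-b)p_\alpha(a-b)}{2}$ satisfies $|m_\alpha(a,b)-\max(a,b)|\le2^{-\alpha}$ for all $a,b\in[0,1]$. Define $r_\alpha(x)=\frac{x+xp_\alpha(x)}{2}$ and $\tilde r_{\alpha,B}(x)=B\,r_\alpha(x/B)$. Define $M_{\alpha,1}(x_1)=x_1$, $M_{\alpha,2k}(x_1,\dots,x_{2k})=m_\alpha(M_{\alpha,k}(x_1,\dots,x_k),M_{\alpha,k}(x_{k+1},\dots,x_{2k}))$, $M_{\alpha,2k+1}(x_1,\dots,x_{2k+1})=m_\alpha(M_{\alpha,k}(x_1,\dots,x_k),M_{\alpha,k+1}(x_{k+1},\dots,x_{2k+1}))$, and $\tilde M_{\alpha,n,B}(x_1,\dots,x_n)=B'\big(M_{\alpha,n}(\tfrac{x_1}{B'}+0.5,\dots,\tfrac{x_n}{B'}+0.5)-0.5\big)$ with $B'=B/(0.5-(\lceil\log_2 n\rceil-1)2^{-\alpha})$. The constant $C$ may depend on the model parameters (the matrices of the linear blocks, kernel sizes) and on $B$, but not on $\alpha$. *)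

theory Defs
  imports Complex_Main "HOL-Computational_Algebra.Polynomial"
begin

definition linf :: "real list \<Rightarrow> real" where
  "linf xs = foldr (\<lambda>t m. max \<bar>t\<bar> m) xs 0"

definition m_alpha :: "(nat \<Rightarrow> real poly) \<Rightarrow> nat \<Rightarrow> real \<Rightarrow> real \<Rightarrow> real" where
  "m_alpha p \<alpha> a b = ((a + b) + (a - b) * poly (p \<alpha>) (a - b)) / 2"

definition r_alpha :: "(nat \<Rightarrow> real poly) \<Rightarrow> nat \<Rightarrow> real \<Rightarrow> real" where
  "r_alpha p \<alpha> x = (x + x * poly (p \<alpha>) x) / 2"

definition r_tilde :: "(nat \<Rightarrow> real poly) \<Rightarrow> nat \<Rightarrow> real \<Rightarrow> real \<Rightarrow> real" where
  "r_tilde p \<alpha> B x = B * r_alpha p \<alpha> (x / B)"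

function M_tree :: "(real \<Rightarrow> real \<Rightarrow> real) \<Rightarrow> real list \<Rightarrow> real" where
  "M_tree m xs = (if length xs \<le> 1 then hd xs
     else m (M_tree m (take (length xs div 2) xs)) (M_tree m (drop (length xs div 2) xs)))"
  by pat_completeness auto
termination by (relation "measure (\<lambda>(m, xs). length xs)") auto

definition M_alpha :: "(nat \<Rightarrow> real poly) \<Rightarrow> nat \<Rightarrow> real list \<Rightarrow> real" where
  "M_alpha p \<alpha> xs = M_tree (m_alpha p \<alpha>) xs"

definition B_prime :: "nat \<Rightarrow> nat \<Rightarrow> real \<Rightarrow> real" where
  "B_prime \<alpha> n B = B / (1/2 - (real_of_int \<lceil>log 2 (real n)\<rceil> - 1) * (1/2) ^ \<alpha>)"

definition M_tilde :: "(nat \<Rightarrow> real poly) \<Rightarrow> nat \<Rightarrow> nat \<Rightarrow> real \<Rightarrow> real list \<Rightarrow> real" where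
  "M_tilde p \<alpha> n B xs =
     B_prime \<alpha> n B * (M_alpha p \<alpha> (map (\<lambda>x. x / B_prime \<alpha> n B + 1/2) xs) - 1/2)"

(* Basic blocks. MaxPool k0 ws: kernel size k0, ws = list of windows, each window is the list of
   the k0^2 input indices whose maximum forms one output coordinate. *)
datatype block =
    Linear "real list list" "real list"
  | ReLU
  | MaxPool nat "nat list list"
  | Softmax

fun out_dim :: "nat \<Rightarrow> block \<Rightarrow> nat" where
  "out_dim d (Linear A b) = length A"
| "out_dim d ReLU = d"
| "out_dim d (MaxPool k0 ws) = length ws"
| "out_dim d Softmax = d"

fun wf_block :: "nat \<Rightarrow> block \<Rightarrow> bool" where
  "wf_block d (Linear A b) = (length b = length A \<and> (\<forall>row\<in>set A. length row = d))"
| "wf_block d ReLU = True"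
| "wf_block d (MaxPool k0 ws) =
     (1 \<le> k0 \<and> k0 \<le> 10 \<and> (\<forall>w\<in>set ws. length w = k0^2 \<and> (\<forall>i\<in>set w. i < d)))"
| "wf_block d Softmax = True"

fun wf_model :: "nat \<Rightarrow> block list \<Rightarrow> bool" where
  "wf_model d [] = True"
| "wf_model d (b # bs) = (wf_block d b \<and> wf_model (out_dim d b) bs)"

fun apply_block :: "block \<Rightarrow> real list \<Rightarrow> real list" where
  "apply_block (Linear A b) x = map2 (+) (map (\<lambda>row. sum_list (map2 (*) row x)) A) b"
| "apply_block ReLU x = map (\<lambda>t. max t 0) x"
| "apply_block (MaxPool k0 ws) x = map (\<lambda>w. Max (set (map (\<lambda>i. x ! i) w))) ws"
| "apply_block Softmax x = map (\<lambda>t. exp t / sum_list (map exp x)) x"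

fun apply_block_approx :: "(nat \<Rightarrow> real poly) \<Rightarrow> nat \<Rightarrow> real \<Rightarrow> block \<Rightarrow> real list \<Rightarrow> real list" where
  "apply_block_approx p \<alpha> B (Linear A b) x = apply_block (Linear A b) x"
| "apply_block_approx p \<alpha> B ReLU x = map (r_tilde p \<alpha> B) x"
| "apply_block_approx p \<alpha> B (MaxPool k0 ws) x =
     map (\<lambda>w. M_tilde p \<alpha> (k0^2) B (map (\<lambda>i. x ! i) w)) ws"
| "apply_block_approx p \<alpha> B Softmax x = apply_block Softmax x"

(* model [A_0, ..., A_n] applied as A_n \<circ> ... \<circ> A_0 *)
definition eval_model :: "block list \<Rightarrow> real list \<Rightarrow> real list" where
  "eval_model bs x = fold apply_block bs x"

definition eval_model_approx :: "(nat \<Rightarrow> real poly) \<Rightarrow> nat \<Rightarrow> real \<Rightarrow> block list \<Rightarrow> real list \<Rightarrow> real list" where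
  "eval_model_approx p \<alpha> B bs x = fold (apply_block_approx p \<alpha> B) bs x"

end

theory Submission
  imports Defs
begin

lemma linf_Cons[simp]: "linf (a # xs) = max \<bar>a\<bar> (linf xs)"
  by (simp add: linf_def)
lemma linf_Nil[simp]: "linf [] = 0" by (simp add: linf_def)

lemma linf_le_iff: "linf xs \<le> c \<longleftrightarrow> 0 \<le> c \<and> (\<forall>t\<in>set xs. \<bar>t\<bar> \<le> c)"
  by (induction xs) auto

lemma linf_ge: "t \<in> set xs \<Longrightarrow> \<bar>t\<bar> \<le> linf xs"
  using linf_le_iff by blast

lemma linf_nonneg: "0 \<le> linf xs"
  using linf_le_iff by blast

lemma linf_map2_le:
  assumes "length u = length v" "0 \<le> c" "\<And>i. i < length u \<Longrightarrow> \<bar>u!i - v!i\<bar> \<le> c"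
  shows "linf (map2 (-) u v) \<le> c"
  using assms by (auto simp: linf_le_iff in_set_conv_nth)

lemma nth_le_linf_map2:
  assumes "length u = length v" "i < length u"
  shows "\<bar>u!i - v!i\<bar> \<le> linf (map2 (-) u v)"
proof -
  have "(map2 (-) u v) ! i = u!i - v!i" using assms by simp
  moreover have "(map2 (-) u v) ! i \<in> set (map2 (-) u v)" using assms by (intro nth_mem) simp
  ultimately show ?thesis using linf_ge by metis
qed

lemma nth_le_linf: "i < length u \<Longrightarrow> \<bar>u!i\<bar> \<le> linf u"
  by (intro linf_ge nth_mem)

lemma linf_self: "linf (map2 (-) x x) = 0"
  using linf_map2_le[of x x 0] linf_nonneg[of "map2 (-) x x"] by simp

declare M_tree.simps[simp del]

lemma M_tree_tree:
  fixes p :: "nat \<Rightarrow> real poly"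
  assumes hp: "\<And>a b. a \<in> {0..1} \<Longrightarrow> b \<in> {0..1} \<Longrightarrow>
               \<bar>m_alpha p \<alpha> a b - max a b\<bar> \<le> (1/2) ^ \<alpha>"
  shows "\<forall>ys. 1 \<le> length ys \<longrightarrow> length ys \<le> 2^k \<longrightarrow>
     (\<forall>y\<in>set ys. real k * (1/2)^\<alpha> \<le> y + (1/2)^\<alpha> \<and> y \<le> 1 + (1/2)^\<alpha> - real k * (1/2)^\<alpha>) \<longrightarrow>
     \<bar>M_tree (m_alpha p \<alpha>) ys - Max (set ys)\<bar> \<le> real k * (1/2)^\<alpha>"
proof (induction k)
  case 0
  show ?case
  proof (intro allI impI)
    fix ys :: "real list" assume "1 \<le> length ys" "length ys \<le> 2^0"
    then obtain y where "ys = [y]" by (cases ys) auto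
    then show "\<bar>M_tree (m_alpha p \<alpha>) ys - Max (set ys)\<bar> \<le> real 0 * (1/2)^\<alpha>"
      by (simp add: M_tree.simps)
  qed
next
  case (Suc k)
  define e :: real where "e = (1/2)^\<alpha>"
  have e0: "0 \<le> e" by (simp add: e_def)
  show ?case
  proof (intro allI impI)
    fix ys :: "real list"
    assume l1: "1 \<le> length ys" and l2: "length ys \<le> 2 ^ Suc k"
      and hy: "\<forall>y\<in>set ys. real (Suc k) * (1/2)^\<alpha> \<le> y + (1/2)^\<alpha> \<and> y \<le> 1 + (1/2)^\<alpha> - real (Suc k) * (1/2)^\<alpha>"
    have hy': "\<forall>y\<in>set ys. real k * e \<le> y \<and> y \<le> 1 - real k * e"
      using hy by (auto simp: e_def algebra_simps)
    show "\<bar>M_tree (m_alpha p \<alpha>) ys - Max (set ys)\<bar> \<le> real (Suc k) * (1/2)^\<alpha>"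
    proof (cases "length ys \<le> 1")
      case True
      then obtain y where "ys = [y]" using l1 by (cases ys) auto
      then show ?thesis by (simp add: M_tree.simps)
    next
      case False
      define h where "h = length ys div 2"
      define L where "L = take h ys"
      define R where "R = drop h ys"
      have eq: "M_tree (m_alpha p \<alpha>) ys = m_alpha p \<alpha> (M_tree (m_alpha p \<alpha>) L) (M_tree (m_alpha p \<alpha>) R)"
        using False by (subst M_tree.simps) (simp add: L_def R_def h_def)
      have lL: "1 \<le> length L" "length L \<le> 2^k" using False l2 by (auto simp: L_def h_def)
      have lR: "1 \<le> length R" "length R \<le> 2^k" using False l2 by (auto simp: R_def h_def)
      have sL: "set L \<subseteq> set ys" by (simp add: L_def set_take_subset)
      have sR: "set R \<subseteq> set ys" by (simp add: R_def set_drop_subset)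
      have bL: "\<forall>y\<in>set L. real k * (1/2)^\<alpha> \<le> y + (1/2)^\<alpha> \<and> y \<le> 1 + (1/2)^\<alpha> - real k * (1/2)^\<alpha>"
      proof
        fix y assume "y \<in> set L"
        then have "real k * e \<le> y" "y \<le> 1 - real k * e" using hy' sL by auto
        then show "real k * (1/2)^\<alpha> \<le> y + (1/2)^\<alpha> \<and> y \<le> 1 + (1/2)^\<alpha> - real k * (1/2)^\<alpha>"
          using e0 unfolding e_def by linarith
      qed
      have bR: "\<forall>y\<in>set R. real k * (1/2)^\<alpha> \<le> y + (1/2)^\<alpha> \<and> y \<le> 1 + (1/2)^\<alpha> - real k * (1/2)^\<alpha>"
      proof
        fix y assume "y \<in> set R"
        then have "real k * e \<le> y" "y \<le> 1 - real k * e" using hy' sR by auto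
        then show "real k * (1/2)^\<alpha> \<le> y + (1/2)^\<alpha> \<and> y \<le> 1 + (1/2)^\<alpha> - real k * (1/2)^\<alpha>"
          using e0 unfolding e_def by linarith
      qed
      define u where "u = M_tree (m_alpha p \<alpha>) L"
      define v where "v = M_tree (m_alpha p \<alpha>) R"
      have iu: "\<bar>u - Max (set L)\<bar> \<le> real k * e" using Suc.IH lL bL by (simp add: u_def e_def)
      have iv: "\<bar>v - Max (set R)\<bar> \<le> real k * e" using Suc.IH lR bR by (simp add: v_def e_def)
      have neL: "set L \<noteq> {}" using lL by auto
      have neR: "set R \<noteq> {}" using lR by auto
      have mL: "Max (set L) \<in> set ys" using sL neL Max_in by blast
      have mR: "Max (set R) \<in> set ys" using sR neR Max_in by blast
      have u01: "u \<in> {0..1}" using iu hy' mL by (auto simp: abs_le_iff)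
      have v01: "v \<in> {0..1}" using iv hy' mR by (auto simp: abs_le_iff)
      have hm: "\<bar>m_alpha p \<alpha> u v - max u v\<bar> \<le> e" using hp[OF u01 v01] by (simp add: e_def)
      have "set ys = set L \<union> set R" by (simp add: L_def R_def flip: set_append)
      then have Mys: "Max (set ys) = max (Max (set L)) (Max (set R))"
        using neL neR by (simp add: Max_Un)
      have "\<bar>max u v - max (Max (set L)) (Max (set R))\<bar> \<le> real k * e"
        using iu iv by (auto simp: abs_le_iff max_def)
      then have "\<bar>m_alpha p \<alpha> u v - Max (set ys)\<bar> \<le> e + real k * e"
        using hm Mys by linarith
      moreover have "M_tree (m_alpha p \<alpha>) ys = m_alpha p \<alpha> u v" using eq by (simp add: u_def v_def)
      moreover have "real (Suc k) * (1/2)^\<alpha> = e + real k * e" by (simp add: e_def algebra_simps)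
      ultimately show ?thesis by simp
    qed
  qed
qed

lemma M_tilde_err:
  fixes p :: "nat \<Rightarrow> real poly"
  assumes hp: "\<And>a b. a \<in> {0..1} \<Longrightarrow> b \<in> {0..1} \<Longrightarrow>
               \<bar>m_alpha p \<alpha> a b - max a b\<bar> \<le> (1/2) ^ \<alpha>"
    and ha: "4 \<le> \<alpha>" and hn: "1 \<le> n" "n \<le> 100" and hl: "length zs = n"
    and hz: "\<forall>z\<in>set zs. \<bar>z\<bar> \<le> B" and hB: "0 < B"
  shows "\<bar>M_tilde p \<alpha> n B zs - Max (set zs)\<bar> \<le> 56 * B * (1/2)^\<alpha>"
proof -
  define e :: real where "e = (1/2)^\<alpha>"
  have e0: "0 \<le> e" by (simp add: e_def)
  have e16: "e \<le> 1/16"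
  proof -
    have "(1/2::real)^\<alpha> \<le> (1/2)^4" using ha by (intro power_decreasing) auto
    moreover have "(1/2::real)^4 = 1/16" by (simp add: eval_nat_numeral)
    ultimately show ?thesis unfolding e_def by linarith
  qed
  define l where "l = \<lceil>log 2 (real n)\<rceil>"
  have lg0: "0 \<le> log 2 (real n)" using hn by simp
  have "log 2 (real n) \<le> log 2 128" using hn by (intro log_mono) auto
  also have "log 2 (128::real) = 7"
    using log_pow_cancel[of "2::real" 7] by simp
  finally have lg7: "log 2 (real n) \<le> 7" .
  have l0: "0 \<le> l" using lg0 by (simp add: l_def)
  have l7: "l \<le> 7" using lg7 unfolding l_def by (simp add: ceiling_le_iff)
  define k where "k = nat l"
  have rk: "real k = real_of_int l" using l0 by (simp add: k_def)
  have "real n = 2 powr (log 2 (real n))" using hn by simp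
  also have "\<dots> \<le> 2 powr (real k)" unfolding rk l_def by (intro powr_mono) auto
  also have "\<dots> = 2 ^ k" by (simp add: powr_realpow)
  finally have nk: "n \<le> 2 ^ k" by (metis of_nat_le_iff of_nat_numeral of_nat_power)
  define D where "D = 1/2 - (real_of_int l - 1) * e"
  have D8: "1/8 \<le> D"
  proof -
    have "(real_of_int l - 1) * e \<le> 6 * (1/16)"
      using l7 e16 e0 by (intro mult_mono) auto
    then show ?thesis by (simp add: D_def)
  qed
  define B' where "B' = B / D"
  have BP: "B_prime \<alpha> n B = B'" by (simp add: B_prime_def B'_def D_def l_def e_def)
  have B'0: "0 < B'" using D8 hB by (simp add: B'_def)
  have B'8: "B' \<le> 8 * B"
  proof -
    have "B / D \<le> B / (1/8)" using D8 hB by (intro divide_left_mono) auto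
    then show ?thesis by (simp add: B'_def)
  qed
  have BD: "B / B' = D" using hB D8 by (simp add: B'_def)
  define f where "f = (\<lambda>x::real. x / B' + 1/2)"
  define ys where "ys = map f zs"
  have hys: "\<forall>y\<in>set ys. real k * e \<le> y + e \<and> y \<le> 1 + e - real k * e"
  proof
    fix y assume "y \<in> set ys"
    then obtain z where z1: "z \<in> set zs" and z2: "y = f z" unfolding ys_def by auto
    have "\<bar>z\<bar> \<le> B" using hz z1 by blast
    then have "\<bar>z\<bar> / B' \<le> B / B'" using B'0 by (intro divide_right_mono) auto
    then have zD: "\<bar>z / B'\<bar> \<le> D" using BD B'0 by (simp add: abs_divide)
    have y: "y = z / B' + 1/2" using z2 by (simp add: f_def)
    have ke: "(real_of_int l - 1) * e = real k * e - e" using rk by (simp add: algebra_simps)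
    from zD[unfolded abs_le_iff] have "- D \<le> z / B'" "z / B' \<le> D" by linarith+
    then show "real k * e \<le> y + e \<and> y \<le> 1 + e - real k * e"
      using y ke unfolding D_def by linarith
  qed
  have lys: "1 \<le> length ys" "length ys \<le> 2^k" using hl hn nk by (auto simp: ys_def)
  have tree: "\<bar>M_tree (m_alpha p \<alpha>) ys - Max (set ys)\<bar> \<le> real k * e"
    using M_tree_tree[OF hp, of k] lys hys by (simp add: e_def)
  have ne: "set zs \<noteq> {}" using hl hn by auto
  have monof: "mono f" using B'0 by (auto simp: mono_def f_def divide_right_mono)
  have Mys: "Max (set ys) = f (Max (set zs))"
    using mono_Max_commute[OF monof _ ne] by (simp add: ys_def)
  have Mt: "M_tilde p \<alpha> n B zs = B' * (M_tree (m_alpha p \<alpha>) ys - 1/2)"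
    by (simp add: M_tilde_def M_alpha_def BP ys_def f_def)
  have "M_tilde p \<alpha> n B zs - Max (set zs) = B' * (M_tree (m_alpha p \<alpha>) ys - Max (set ys))"
    using B'0 by (simp add: Mt Mys f_def algebra_simps)
  then have "\<bar>M_tilde p \<alpha> n B zs - Max (set zs)\<bar> = B' * \<bar>M_tree (m_alpha p \<alpha>) ys - Max (set ys)\<bar>"
    using B'0 by (simp add: abs_mult)
  also have "\<dots> \<le> (8 * B) * (7 * e)"
  proof -
    have "real k \<le> 7" using rk l7 by simp
    then have "real k * e \<le> 7 * e" using e0 by (intro mult_right_mono) auto
    then have t7: "\<bar>M_tree (m_alpha p \<alpha>) ys - Max (set ys)\<bar> \<le> 7 * e" using tree by linarith
    show ?thesis using hB by (intro mult_mono[OF B'8 t7]) auto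
  qed
  finally have fin: "\<bar>M_tilde p \<alpha> n B zs - Max (set zs)\<bar> \<le> (8 * B) * (7 * e)" .
  have "(8 * B) * (7 * e) = 56 * B * e" by simp
  then show ?thesis using fin unfolding e_def[symmetric] by simp
qed

lemma r_tilde_err:
  fixes p :: "nat \<Rightarrow> real poly"
  assumes hp: "\<And>a b. a \<in> {0..1} \<Longrightarrow> b \<in> {0..1} \<Longrightarrow>
               \<bar>m_alpha p \<alpha> a b - max a b\<bar> \<le> (1/2) ^ \<alpha>"
    and ht: "\<bar>t\<bar> \<le> B" and hB: "0 < B"
  shows "\<bar>r_tilde p \<alpha> B t - max t 0\<bar> \<le> B * (1/2)^\<alpha>"
proof -
  define s where "s = t / B"
  have "\<bar>t\<bar> / B \<le> B / B" using ht hB by (intro divide_right_mono) auto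
  moreover have "\<bar>s\<bar> = \<bar>t\<bar> / B" using hB by (simp add: s_def abs_divide)
  ultimately have s1: "\<bar>s\<bar> \<le> 1" using hB by simp
  have rs: "\<bar>r_alpha p \<alpha> s - max s 0\<bar> \<le> (1/2)^\<alpha>"
  proof (cases "0 \<le> s")
    case True
    have "r_alpha p \<alpha> s = m_alpha p \<alpha> s 0" by (simp add: r_alpha_def m_alpha_def)
    moreover have a: "s \<in> {0..1}" using True s1 by (simp add: abs_le_iff)
    moreover have b: "(0::real) \<in> {0..1}" by simp
    ultimately show ?thesis using hp[OF a b] True by (simp add: max_def)
  next
    case False
    have "r_alpha p \<alpha> s = m_alpha p \<alpha> 0 (-s) + s" by (simp add: r_alpha_def m_alpha_def field_simps)
    moreover have a: "-s \<in> {0..1}" using False s1 by (simp add: abs_le_iff)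
    moreover have b: "(0::real) \<in> {0..1}" by simp
    ultimately show ?thesis using hp[OF b a] False by (simp add: max_def)
  qed
  have ts: "t = B * s" using hB by (simp add: s_def)
  have mx: "max t 0 = B * max s 0"
  proof (cases "0 \<le> s")
    case True
    then show ?thesis using hB unfolding ts by simp
  next
    case False
    then have "B * s < 0" using hB by (simp add: mult_pos_neg)
    then show ?thesis using False unfolding ts by simp
  qed
  have "r_tilde p \<alpha> B t - max t 0 = B * (r_alpha p \<alpha> s - max s 0)"
    unfolding mx by (simp add: r_tilde_def s_def right_diff_distrib)
  then have "\<bar>r_tilde p \<alpha> B t - max t 0\<bar> = B * \<bar>r_alpha p \<alpha> s - max s 0\<bar>"
    using hB by (simp add: abs_mult)
  also have "\<dots> \<le> B * (1/2)^\<alpha>" using rs hB by (intro mult_left_mono) auto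
  finally show ?thesis .
qed

lemma dot_diff:
  fixes r x x' :: "real list"
  shows "length r = length x \<Longrightarrow> length x' = length x \<Longrightarrow> (\<forall>i<length x. \<bar>x'!i - x!i\<bar> \<le> e) \<Longrightarrow>
    \<bar>sum_list (map2 (*) r x') - sum_list (map2 (*) r x)\<bar> \<le> sum_list (map abs r) * e"
proof (induction r arbitrary: x x')
  case Nil
  then show ?case by simp
next
  case (Cons a r)
  obtain b xs where x: "x = b # xs" using Cons.prems(1) by (cases x) auto
  obtain b' xs' where x': "x' = b' # xs'" using Cons.prems(2) x by (cases x') auto
  have h0: "\<bar>b' - b\<bar> \<le> e" using Cons.prems(3) x x' by (metis length_Cons nth_Cons_0 zero_less_Suc)
  have hs: "\<forall>i<length xs. \<bar>xs'!i - xs!i\<bar> \<le> e" using Cons.prems(3) x x' by auto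
  have IH: "\<bar>sum_list (map2 (*) r xs') - sum_list (map2 (*) r xs)\<bar> \<le> sum_list (map abs r) * e"
    using Cons.IH[of xs xs'] Cons.prems x x' hs by simp
  have "\<bar>a * b' - a * b\<bar> = \<bar>a\<bar> * \<bar>b' - b\<bar>" by (simp add: abs_mult flip: right_diff_distrib)
  also have "\<dots> \<le> \<bar>a\<bar> * e" using h0 by (intro mult_left_mono) auto
  finally have "\<bar>a * b' - a * b\<bar> \<le> \<bar>a\<bar> * e" .
  then show ?case using IH x x' by (simp add: algebra_simps abs_le_iff)
qed

lemma exp_lip:
  fixes a b B :: real
  assumes "\<bar>a\<bar> \<le> B" "\<bar>b\<bar> \<le> B"
  shows "\<bar>exp a - exp b\<bar> \<le> exp B * \<bar>a - b\<bar>"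
proof -
  have gen: "exp v - exp u \<le> exp B * (v - u)" if "u \<le> v" "v \<le> B" for u v :: real
  proof -
    have "1 + (u - v) \<le> exp (u - v)" by (rule exp_ge_add_one_self)
    then have "1 - exp (u - v) \<le> v - u" by linarith
    then have "exp v * (1 - exp (u - v)) \<le> exp v * (v - u)" by (intro mult_left_mono) auto
    also have "\<dots> \<le> exp B * (v - u)" using that by (intro mult_right_mono) auto
    finally show ?thesis by (simp add: algebra_simps exp_diff)
  qed
  show ?thesis
  proof (cases "a \<le> b")
    case True
    then show ?thesis using gen[of a b] assms exp_le_cancel_iff[of a b] by (auto simp: abs_le_iff)
  next
    case False
    then show ?thesis using gen[of b a] assms exp_le_cancel_iff[of b a] by (auto simp: abs_le_iff)
  qed
qed

lemma sum_exp_diff: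
  fixes x x' :: "real list"
  shows "length x' = length x \<Longrightarrow> (\<forall>i<length x. \<bar>x'!i - x!i\<bar> \<le> e \<and> \<bar>x!i\<bar> \<le> B \<and> \<bar>x'!i\<bar> \<le> B) \<Longrightarrow>
    \<bar>sum_list (map exp x') - sum_list (map exp x)\<bar> \<le> real (length x) * (exp B * e)"
proof (induction x arbitrary: x')
  case Nil
  then show ?case by simp
next
  case (Cons b xs)
  obtain b' xs' where x': "x' = b' # xs'" using Cons.prems(1) by (cases x') auto
  have h0: "\<bar>b' - b\<bar> \<le> e" "\<bar>b\<bar> \<le> B" "\<bar>b'\<bar> \<le> B" using Cons.prems(2) x' by (metis length_Cons nth_Cons_0 zero_less_Suc)+
  have hs: "\<forall>i<length xs. \<bar>xs'!i - xs!i\<bar> \<le> e \<and> \<bar>xs!i\<bar> \<le> B \<and> \<bar>xs'!i\<bar> \<le> B" using Cons.prems(2) x' by auto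
  have IH: "\<bar>sum_list (map exp xs') - sum_list (map exp xs)\<bar> \<le> real (length xs) * (exp B * e)"
    using Cons.IH[of xs'] Cons.prems x' hs by simp
  have "\<bar>exp b' - exp b\<bar> \<le> exp B * \<bar>b' - b\<bar>" using exp_lip h0 by blast
  also have "\<dots> \<le> exp B * e" using h0 by (intro mult_left_mono) auto
  finally have "\<bar>exp b' - exp b\<bar> \<le> exp B * e" .
  then show ?case using IH x' by (simp add: algebra_simps abs_le_iff)
qed

lemma sum_exp_lower:
  fixes x :: "real list"
  shows "(\<forall>t\<in>set x. \<bar>t\<bar> \<le> B) \<Longrightarrow> real (length x) * exp (-B) \<le> sum_list (map exp x)"
proof (induction x)
  case Nil
  then show ?case by simp
next
  case (Cons a x)
  have "exp (-B) \<le> exp a" using Cons.prems by auto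
  moreover have "real (length x) * exp (-B) \<le> sum_list (map exp x)" using Cons by simp
  moreover have "sum_list (map exp (a#x)) = exp a + sum_list (map exp x)" by simp
  moreover have "real (length (a#x)) * exp (-B) = exp (-B) + real (length x) * exp (-B)"
    by (simp add: algebra_simps)
  ultimately show ?case by linarith
qed

lemma frac_lip:
  fixes a b S S' L u M v :: real
  assumes "0 < L" "L \<le> S" "L \<le> S'" "\<bar>a - b\<bar> \<le> u" "0 \<le> b" "b \<le> M" "\<bar>S' - S\<bar> \<le> v"
  shows "\<bar>a / S' - b / S\<bar> \<le> u / L + M * v / (L * L)"
proof -
  have S0: "0 < S" "0 < S'" using assms by auto
  have eq: "a / S' - b / S = (a - b) / S' + b * (S - S') / (S * S')"
    using S0 by (simp add: field_simps)
  have u0: "0 \<le> u" using assms(4) by linarith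
  have v0: "0 \<le> v" using assms(7) by linarith
  have t1: "\<bar>(a - b) / S'\<bar> \<le> u / L"
  proof -
    have "\<bar>(a - b) / S'\<bar> = \<bar>a - b\<bar> / S'" using S0 by (simp add: abs_divide)
    also have "\<dots> \<le> u / S'" using assms(4) S0 by (intro divide_right_mono) auto
    also have "\<dots> \<le> u / L" using u0 assms(1,3) by (intro divide_left_mono) auto
    finally show ?thesis .
  qed
  have t2: "\<bar>b * (S - S') / (S * S')\<bar> \<le> M * v / (L * L)"
  proof -
    have "\<bar>b * (S - S') / (S * S')\<bar> = b * \<bar>S' - S\<bar> / (S * S')" using S0 assms(5)
      by (simp add: abs_divide abs_mult abs_minus_commute)
    also have "\<dots> \<le> M * v / (S * S')" using S0 assms(5,6,7)
      by (intro divide_right_mono mult_mono) auto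
    also have "\<dots> \<le> M * v / (L * L)" using assms S0 v0
      by (intro divide_left_mono mult_mono mult_nonneg_nonneg) auto
    finally show ?thesis .
  qed
  show ?thesis unfolding eq by (rule order_trans[OF abs_triangle_ineq add_mono[OF t1 t2]])
qed

lemma Max_lip:
  fixes f g :: "nat \<Rightarrow> real"
  assumes "w \<noteq> []" "\<forall>j\<in>set w. \<bar>f j - g j\<bar> \<le> e"
  shows "\<bar>Max (set (map f w)) - Max (set (map g w))\<bar> \<le> e"
proof -
  have gen: "Max (f ` set w) \<le> Max (g ` set w) + e" if "\<forall>j\<in>set w. \<bar>f j - g j\<bar> \<le> e" for f g :: "nat \<Rightarrow> real"
  proof -
    have "Max (f ` set w) \<in> f ` set w" using assms(1) by (intro Max_in) auto
    then obtain j where j: "j \<in> set w" "Max (f ` set w) = f j" by auto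
    have "g j \<le> Max (g ` set w)" using j(1) by (intro Max_ge) auto
    moreover have "f j - g j \<le> e" using that j(1) by (auto simp: abs_le_iff)
    ultimately show ?thesis using j(2) by linarith
  qed
  have "Max (f ` set w) \<le> Max (g ` set w) + e" using gen assms(2) by blast
  moreover have "Max (g ` set w) \<le> Max (f ` set w) + e" using gen[of g f] assms(2) by (auto simp: abs_minus_commute)
  ultimately show ?thesis by (simp add: abs_le_iff)
qed

lemma len_apply: "wf_block d b \<Longrightarrow> length x = d \<Longrightarrow> length (apply_block b x) = out_dim d b"
  by (cases b) auto

lemma len_approx: "wf_block d b \<Longrightarrow> length x = d \<Longrightarrow> length (apply_block_approx p \<alpha> B b x) = out_dim d b"
  by (cases b) auto

lemma diff_bound:
  assumes "length x' = length x"
  shows "\<forall>i<length x. \<bar>x'!i - x!i\<bar> \<le> linf (map2 (-) x' x)"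
  using nth_le_linf_map2[of x' x] assms by auto

lemma sum_abs_nonneg: "0 \<le> sum_list (map abs (r::real list))"
  by (induction r) auto

lemma lin_err:
  assumes wf: "wf_block d (Linear A bv)" and l: "length x = d" "length x' = d"
  shows "linf (map2 (-) (apply_block_approx p \<alpha> B (Linear A bv) x') (apply_block (Linear A bv) x))
     \<le> sum_list (map (\<lambda>r. sum_list (map abs r)) A) * linf (map2 (-) x' x)"
proof -
  define e where "e = linf (map2 (-) x' x)"
  define K where "K = sum_list (map (\<lambda>r. sum_list (map abs r)) A)"
  have he: "\<forall>i<length x. \<bar>x'!i - x!i\<bar> \<le> e" using diff_bound l by (simp add: e_def)
  have e0: "0 \<le> e" by (simp add: e_def linf_nonneg)
  have K0: "0 \<le> K" unfolding K_def by (rule sum_list_nonneg) (auto simp: sum_abs_nonneg)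
  have lb: "length bv = length A" and rows: "\<forall>r\<in>set A. length r = d" using wf by auto
  show ?thesis unfolding e_def[symmetric] K_def[symmetric]
  proof (rule linf_map2_le)
    show "length (apply_block_approx p \<alpha> B (Linear A bv) x') = length (apply_block (Linear A bv) x)"
      using lb by simp
    show "0 \<le> K * e" using K0 e0 by simp
    fix k assume "k < length (apply_block_approx p \<alpha> B (Linear A bv) x')"
    then have k: "k < length A" using lb by simp
    have r: "A ! k \<in> set A" using k by simp
    have eq: "apply_block_approx p \<alpha> B (Linear A bv) x' ! k - apply_block (Linear A bv) x ! k
      = sum_list (map2 (*) (A!k) x') - sum_list (map2 (*) (A!k) x)"
      using k lb by simp
    have "\<bar>sum_list (map2 (*) (A!k) x') - sum_list (map2 (*) (A!k) x)\<bar> \<le> sum_list (map abs (A!k)) * e"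
      using dot_diff[of "A!k" x x' e] rows r l he by simp
    also have "\<dots> \<le> K * e"
    proof (rule mult_right_mono[OF _ e0])
      show "sum_list (map abs (A!k)) \<le> K" unfolding K_def
        by (rule member_le_sum_list) (use r in \<open>auto simp: sum_abs_nonneg\<close>)
    qed
    finally show "\<bar>apply_block_approx p \<alpha> B (Linear A bv) x' ! k - apply_block (Linear A bv) x ! k\<bar> \<le> K * e"
      using eq by simp
  qed
qed

lemma relu_err:
  fixes p :: "nat \<Rightarrow> real poly"
  assumes hp: "\<And>a b. a \<in> {0..1} \<Longrightarrow> b \<in> {0..1} \<Longrightarrow>
               \<bar>m_alpha p \<alpha> a b - max a b\<bar> \<le> (1/2) ^ \<alpha>"
    and hB: "0 < B" and l: "length x' = length x" and bx: "linf x' \<le> B"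
  shows "linf (map2 (-) (apply_block_approx p \<alpha> B ReLU x') (apply_block ReLU x))
     \<le> 1 * linf (map2 (-) x' x) + B * (1/2)^\<alpha>"
proof -
  define e where "e = linf (map2 (-) x' x)"
  have he: "\<forall>i<length x. \<bar>x'!i - x!i\<bar> \<le> e" using diff_bound l by (simp add: e_def)
  have e0: "0 \<le> e" by (simp add: e_def linf_nonneg)
  show ?thesis unfolding e_def[symmetric]
  proof (rule linf_map2_le)
    show "length (apply_block_approx p \<alpha> B ReLU x') = length (apply_block ReLU x)" using l by simp
    show "0 \<le> 1 * e + B * (1/2)^\<alpha>" using e0 hB by simp
    fix i assume "i < length (apply_block_approx p \<alpha> B ReLU x')"
    then have i: "i < length x'" by simp
    have t: "\<bar>x'!i\<bar> \<le> B" using nth_le_linf[OF i] bx by linarith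
    have a: "\<bar>r_tilde p \<alpha> B (x'!i) - max (x'!i) 0\<bar> \<le> B * (1/2)^\<alpha>" using r_tilde_err[OF hp t hB] .
    have b: "\<bar>max (x'!i) 0 - max (x!i) 0\<bar> \<le> e" using he i l by (auto simp: abs_le_iff max_def)
    have eq: "apply_block_approx p \<alpha> B ReLU x' ! i - apply_block ReLU x ! i = r_tilde p \<alpha> B (x'!i) - max (x!i) 0"
      using i l by simp
    show "\<bar>apply_block_approx p \<alpha> B ReLU x' ! i - apply_block ReLU x ! i\<bar> \<le> 1 * e + B * (1/2)^\<alpha>"
      unfolding eq using a b by (simp add: abs_le_iff)
  qed
qed

lemma soft_err:
  assumes l: "length x' = length x" and bx: "linf x \<le> B" and bx': "linf x' \<le> B"
  shows "linf (map2 (-) (apply_block_approx p \<alpha> B Softmax x') (apply_block Softmax x))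
     \<le> (exp B / exp (-B) + exp B * (real (length x) * exp B) / (exp (-B) * exp (-B))) * linf (map2 (-) x' x)"
proof -
  define e where "e = linf (map2 (-) x' x)"
  define d where "d = length x"
  define K where "K = exp B / exp (-B) + exp B * (real d * exp B) / (exp (-B) * exp (-B))"
  have he: "\<forall>i<length x. \<bar>x'!i - x!i\<bar> \<le> e" using diff_bound l by (simp add: e_def)
  have e0: "0 \<le> e" by (simp add: e_def linf_nonneg)
  have K0: "0 \<le> K" by (simp add: K_def)
  have bxi: "\<forall>t\<in>set x. \<bar>t\<bar> \<le> B" using bx by (simp add: linf_le_iff)
  have bxi': "\<forall>t\<in>set x'. \<bar>t\<bar> \<le> B" using bx' by (simp add: linf_le_iff)
  define S where "S = sum_list (map exp x)"
  define S' where "S' = sum_list (map exp x')"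
  show ?thesis unfolding e_def[symmetric] K_def[symmetric, unfolded d_def]
  proof (rule linf_map2_le)
    show "length (apply_block_approx p \<alpha> B Softmax x') = length (apply_block Softmax x)" using l by simp
    show "0 \<le> K * e" using K0 e0 by simp
    fix i assume "i < length (apply_block_approx p \<alpha> B Softmax x')"
    then have i: "i < length x" "i < length x'" using l by auto
    have d1: "1 \<le> real d" using i by (simp add: d_def)
    have eq: "apply_block_approx p \<alpha> B Softmax x' ! i - apply_block Softmax x ! i = exp (x'!i) / S' - exp (x!i) / S"
      using i by (simp add: S_def S'_def)
    have LS: "exp (-B) \<le> S"
    proof -
      have "real d * exp (-B) \<le> S" using sum_exp_lower[OF bxi] by (simp add: S_def d_def)
      moreover have "exp (-B) \<le> real d * exp (-B)" using d1 by simp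
      ultimately show ?thesis by linarith
    qed
    have LS': "exp (-B) \<le> S'"
    proof -
      have "real d * exp (-B) \<le> S'" using sum_exp_lower[OF bxi'] l by (simp add: S'_def d_def)
      moreover have "exp (-B) \<le> real d * exp (-B)" using d1 by simp
      ultimately show ?thesis by linarith
    qed
    have xi: "\<bar>x!i\<bar> \<le> B" "\<bar>x'!i\<bar> \<le> B" using bxi bxi' i by auto
    have ab: "\<bar>exp (x'!i) - exp (x!i)\<bar> \<le> exp B * e"
    proof -
      have "\<bar>exp (x'!i) - exp (x!i)\<bar> \<le> exp B * \<bar>x'!i - x!i\<bar>" using exp_lip xi by blast
      also have "\<dots> \<le> exp B * e" using he i by (intro mult_left_mono) auto
      finally show ?thesis .
    qed
    have bM: "exp (x!i) \<le> exp B" using xi by auto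
    have SS: "\<bar>S' - S\<bar> \<le> real d * (exp B * e)"
    proof -
      have "\<forall>j<length x. \<bar>x'!j - x!j\<bar> \<le> e \<and> \<bar>x!j\<bar> \<le> B \<and> \<bar>x'!j\<bar> \<le> B"
        using he bxi bxi' l by (auto simp: nth_mem)
      then show ?thesis using sum_exp_diff[OF l] by (simp add: S_def S'_def d_def)
    qed
    have "\<bar>exp (x'!i) / S' - exp (x!i) / S\<bar> \<le> (exp B * e) / exp (-B) + exp B * (real d * (exp B * e)) / (exp (-B) * exp (-B))"
      by (rule frac_lip[OF _ LS LS' ab _ bM SS]) auto
    also have "\<dots> = K * e" by (simp add: K_def field_simps)
    finally show "\<bar>apply_block_approx p \<alpha> B Softmax x' ! i - apply_block Softmax x ! i\<bar> \<le> K * e"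
      using eq by simp
  qed
qed

lemma pool_err:
  fixes p :: "nat \<Rightarrow> real poly"
  assumes hp: "\<And>a b. a \<in> {0..1} \<Longrightarrow> b \<in> {0..1} \<Longrightarrow>
               \<bar>m_alpha p \<alpha> a b - max a b\<bar> \<le> (1/2) ^ \<alpha>"
    and ha: "4 \<le> \<alpha>" and hB: "0 < B" and wf: "wf_block d (MaxPool k0 ws)"
    and l: "length x = d" "length x' = d" and bx: "linf x' \<le> B"
  shows "linf (map2 (-) (apply_block_approx p \<alpha> B (MaxPool k0 ws) x') (apply_block (MaxPool k0 ws) x))
     \<le> 1 * linf (map2 (-) x' x) + (56 * B) * (1/2)^\<alpha>"
proof -
  define e where "e = linf (map2 (-) x' x)"
  have he: "\<forall>i<length x. \<bar>x'!i - x!i\<bar> \<le> e" using diff_bound l by (simp add: e_def)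
  have e0: "0 \<le> e" by (simp add: e_def linf_nonneg)
  have k1: "1 \<le> k0" and k10: "k0 \<le> 10" and ww: "\<forall>w\<in>set ws. length w = k0^2 \<and> (\<forall>i\<in>set w. i < d)"
    using wf by auto
  have n1: "1 \<le> k0^2" using k1 by simp
  have n100: "k0^2 \<le> 100"
  proof -
    have "k0^2 \<le> 10^2" using k10 by (intro power_mono) auto
    then show ?thesis by simp
  qed
  show ?thesis unfolding e_def[symmetric]
  proof (rule linf_map2_le)
    show "length (apply_block_approx p \<alpha> B (MaxPool k0 ws) x') = length (apply_block (MaxPool k0 ws) x)" by simp
    show "0 \<le> 1 * e + (56 * B) * (1/2)^\<alpha>" using e0 hB by simp
    fix k assume "k < length (apply_block_approx p \<alpha> B (MaxPool k0 ws) x')"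
    then have k: "k < length ws" by simp
    define w where "w = ws ! k"
    have w: "length w = k0^2" "\<forall>i\<in>set w. i < d" using ww k by (auto simp: w_def)
    have wne: "w \<noteq> []" using w(1) n1 by auto
    have eq: "apply_block_approx p \<alpha> B (MaxPool k0 ws) x' ! k - apply_block (MaxPool k0 ws) x ! k
       = M_tilde p \<alpha> (k0^2) B (map (\<lambda>i. x'!i) w) - Max (set (map (\<lambda>i. x!i) w))"
      using k by (simp add: w_def)
    have zs: "\<forall>z\<in>set (map (\<lambda>i. x'!i) w). \<bar>z\<bar> \<le> B"
    proof
      fix z assume "z \<in> set (map (\<lambda>i. x'!i) w)"
      then obtain i where "i \<in> set w" "z = x'!i" by auto
      moreover have "\<bar>x'!i\<bar> \<le> linf x'" if "i \<in> set w" for i using nth_le_linf w(2) l that by auto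
      ultimately show "\<bar>z\<bar> \<le> B" using bx by force
    qed
    have lw: "length (map (\<lambda>i. x'!i) w) = k0^2" using w(1) by simp
    have a: "\<bar>M_tilde p \<alpha> (k0^2) B (map (\<lambda>i. x'!i) w) - Max (set (map (\<lambda>i. x'!i) w))\<bar> \<le> 56 * B * (1/2)^\<alpha>"
      by (rule M_tilde_err[OF hp ha n1 n100 lw zs hB])
    have b: "\<bar>Max (set (map (\<lambda>i. x'!i) w)) - Max (set (map (\<lambda>i. x!i) w))\<bar> \<le> e"
      by (rule Max_lip[OF wne]) (use he w(2) l in auto)
    show "\<bar>apply_block_approx p \<alpha> B (MaxPool k0 ws) x' ! k - apply_block (MaxPool k0 ws) x ! k\<bar>
       \<le> 1 * e + (56 * B) * (1/2)^\<alpha>"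
      unfolding eq using a b by (simp add: abs_le_iff)
  qed
qed

lemma block_err:
  fixes p :: "nat \<Rightarrow> real poly"
  assumes hp: "\<And>\<alpha> a b. a \<in> {0..1} \<Longrightarrow> b \<in> {0..1} \<Longrightarrow>
               \<bar>m_alpha p \<alpha> a b - max a b\<bar> \<le> (1/2) ^ \<alpha>"
    and hB: "1 < B" and wf: "wf_block d b"
  shows "\<exists>K C. 0 \<le> K \<and> 0 \<le> C \<and> (\<forall>\<alpha> x x'. 4 \<le> \<alpha> \<longrightarrow> length x = d \<longrightarrow> length x' = d \<longrightarrow>
     linf x \<le> B \<longrightarrow> linf x' \<le> B \<longrightarrow>
     linf (map2 (-) (apply_block_approx p \<alpha> B b x') (apply_block b x)) \<le> K * linf (map2 (-) x' x) + C * (1/2)^\<alpha>)"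
proof (cases b)
  case (Linear A bv)
  show ?thesis
  proof (intro exI conjI allI impI)
    show "0 \<le> sum_list (map (\<lambda>r. sum_list (map abs r)) A)"
      by (rule sum_list_nonneg) (auto simp: sum_abs_nonneg)
    show "0 \<le> (0::real)" by simp
    fix \<alpha> :: nat and x x' :: "real list"
    assume "length x = d" "length x' = d"
    then show "linf (map2 (-) (apply_block_approx p \<alpha> B b x') (apply_block b x))
        \<le> sum_list (map (\<lambda>r. sum_list (map abs r)) A) * linf (map2 (-) x' x) + 0 * (1/2)^\<alpha>"
      using lin_err[of d A bv x x' p \<alpha> B] wf Linear by simp
  qed
next
  case ReLU
  show ?thesis
  proof (intro exI conjI allI impI)
    show "0 \<le> (1::real)" by simp
    show "0 \<le> B" using hB by simp
    fix \<alpha> :: nat and x x' :: "real list"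
    assume "length x = d" "length x' = d" "linf x' \<le> B"
    then show "linf (map2 (-) (apply_block_approx p \<alpha> B b x') (apply_block b x))
        \<le> 1 * linf (map2 (-) x' x) + B * (1/2)^\<alpha>"
      using relu_err[OF hp, of B x' x] hB ReLU by simp
  qed
next
  case (MaxPool k0 ws)
  show ?thesis
  proof (intro exI conjI allI impI)
    show "0 \<le> (1::real)" by simp
    show "0 \<le> 56 * B" using hB by simp
    fix \<alpha> :: nat and x x' :: "real list"
    assume "4 \<le> \<alpha>" "length x = d" "length x' = d" "linf x' \<le> B"
    then show "linf (map2 (-) (apply_block_approx p \<alpha> B b x') (apply_block b x))
        \<le> 1 * linf (map2 (-) x' x) + (56 * B) * (1/2)^\<alpha>"
      using pool_err[OF hp, of \<alpha> B d k0 ws x x'] hB wf MaxPool by simp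
  qed
next
  case Softmax
  show ?thesis
  proof (intro exI conjI allI impI)
    show "0 \<le> exp B / exp (-B) + exp B * (real d * exp B) / (exp (-B) * exp (-B))" by simp
    show "0 \<le> (0::real)" by simp
    fix \<alpha> :: nat and x x' :: "real list"
    assume "length x = d" "length x' = d" "linf x \<le> B" "linf x' \<le> B"
    then show "linf (map2 (-) (apply_block_approx p \<alpha> B b x') (apply_block b x))
        \<le> (exp B / exp (-B) + exp B * (real d * exp B) / (exp (-B) * exp (-B))) * linf (map2 (-) x' x) + 0 * (1/2)^\<alpha>"
      using soft_err[of x' x B p \<alpha>] Softmax by simp
  qed
qed

lemma model_err:
  fixes p :: "nat \<Rightarrow> real poly"
  assumes hp: "\<And>\<alpha> a b. a \<in> {0..1} \<Longrightarrow> b \<in> {0..1} \<Longrightarrow>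
               \<bar>m_alpha p \<alpha> a b - max a b\<bar> \<le> (1/2) ^ \<alpha>"
    and hB: "1 < B"
  shows "wf_model d bs \<Longrightarrow> \<exists>K C. 0 \<le> K \<and> 0 \<le> C \<and> (\<forall>\<alpha> x x'. 4 \<le> \<alpha> \<longrightarrow> length x = d \<longrightarrow> length x' = d \<longrightarrow>
     (\<forall>j<length bs. linf (eval_model (take j bs) x) \<le> B \<and> linf (eval_model_approx p \<alpha> B (take j bs) x') \<le> B) \<longrightarrow>
     linf (map2 (-) (eval_model_approx p \<alpha> B bs x') (eval_model bs x)) \<le> K * linf (map2 (-) x' x) + C * (1/2)^\<alpha>)"
proof (induction bs arbitrary: d)
  case Nil
  show ?case
  proof (intro exI conjI allI impI)
    show "0 \<le> (1::real)" "0 \<le> (0::real)" by simp_all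
    fix \<alpha> :: nat and x x' :: "real list"
    show "linf (map2 (-) (eval_model_approx p \<alpha> B [] x') (eval_model [] x)) \<le> 1 * linf (map2 (-) x' x) + 0 * (1/2)^\<alpha>"
      by (simp add: eval_model_def eval_model_approx_def)
  qed
next
  case (Cons b bs)
  have wfb: "wf_block d b" and wfs: "wf_model (out_dim d b) bs" using Cons.prems by auto
  obtain K1 C1 where K1: "0 \<le> K1" "0 \<le> C1" and h1: "\<forall>\<alpha> x x'. 4 \<le> \<alpha> \<longrightarrow> length x = d \<longrightarrow> length x' = d \<longrightarrow>
     linf x \<le> B \<longrightarrow> linf x' \<le> B \<longrightarrow>
     linf (map2 (-) (apply_block_approx p \<alpha> B b x') (apply_block b x)) \<le> K1 * linf (map2 (-) x' x) + C1 * (1/2)^\<alpha>"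
    using block_err[OF hp hB wfb] by blast
  obtain K2 C2 where K2: "0 \<le> K2" "0 \<le> C2" and h2: "\<forall>\<alpha> x x'. 4 \<le> \<alpha> \<longrightarrow> length x = out_dim d b \<longrightarrow> length x' = out_dim d b \<longrightarrow>
     (\<forall>j<length bs. linf (eval_model (take j bs) x) \<le> B \<and> linf (eval_model_approx p \<alpha> B (take j bs) x') \<le> B) \<longrightarrow>
     linf (map2 (-) (eval_model_approx p \<alpha> B bs x') (eval_model bs x)) \<le> K2 * linf (map2 (-) x' x) + C2 * (1/2)^\<alpha>"
    using Cons.IH[OF wfs] by blast
  show ?case
  proof (intro exI conjI allI impI)
    show "0 \<le> K2 * K1" using K1 K2 by simp
    show "0 \<le> K2 * C1 + C2" using K1 K2 by simp
    fix \<alpha> :: nat and x x' :: "real list"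
    assume ha: "4 \<le> \<alpha>" and lx: "length x = d" and lx': "length x' = d"
      and hj: "\<forall>j<length (b # bs). linf (eval_model (take j (b # bs)) x) \<le> B \<and> linf (eval_model_approx p \<alpha> B (take j (b # bs)) x') \<le> B"
    define y where "y = apply_block b x"
    define y' where "y' = apply_block_approx p \<alpha> B b x'"
    have bx: "linf x \<le> B" "linf x' \<le> B" using hj[rule_format, of 0]
      by (simp_all add: eval_model_def eval_model_approx_def)
    have ly: "length y = out_dim d b" "length y' = out_dim d b"
      using len_apply[OF wfb lx] len_approx[OF wfb lx'] by (simp_all add: y_def y'_def)
    have hj': "\<forall>j<length bs. linf (eval_model (take j bs) y) \<le> B \<and> linf (eval_model_approx p \<alpha> B (take j bs) y') \<le> B"
    proof (intro allI impI)
      fix j assume "j < length bs"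
      then have "Suc j < length (b # bs)" by simp
      then show "linf (eval_model (take j bs) y) \<le> B \<and> linf (eval_model_approx p \<alpha> B (take j bs) y') \<le> B"
        using hj[rule_format, of "Suc j"] by (simp add: eval_model_def eval_model_approx_def y_def y'_def)
    qed
    have e1: "linf (map2 (-) y' y) \<le> K1 * linf (map2 (-) x' x) + C1 * (1/2)^\<alpha>"
      using h1 ha lx lx' bx by (simp add: y_def y'_def)
    have e2: "linf (map2 (-) (eval_model_approx p \<alpha> B bs y') (eval_model bs y)) \<le> K2 * linf (map2 (-) y' y) + C2 * (1/2)^\<alpha>"
      using h2 ha ly hj' by simp
    have "K2 * linf (map2 (-) y' y) \<le> K2 * (K1 * linf (map2 (-) x' x) + C1 * (1/2)^\<alpha>)"
      using e1 K2 by (intro mult_left_mono) auto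
    then have "linf (map2 (-) (eval_model_approx p \<alpha> B bs y') (eval_model bs y)) \<le> K2 * K1 * linf (map2 (-) x' x) + (K2 * C1 + C2) * (1/2)^\<alpha>"
      using e2 by (simp add: algebra_simps)
    moreover have "eval_model_approx p \<alpha> B (b # bs) x' = eval_model_approx p \<alpha> B bs y'"
      by (simp add: eval_model_approx_def y'_def)
    moreover have "eval_model (b # bs) x = eval_model bs y"
      by (simp add: eval_model_def y_def)
    ultimately show "linf (map2 (-) (eval_model_approx p \<alpha> B (b # bs) x') (eval_model (b # bs) x)) \<le> K2 * K1 * linf (map2 (-) x' x) + (K2 * C1 + C2) * (1/2)^\<alpha>"
      by simp
  qed
qed

theorem theorem4:
  fixes p :: "nat \<Rightarrow> real poly" and B :: real and blks :: "block list" and d :: nat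
  assumes hB: "B > 1"
    and hp: "\<And>\<alpha> a b. a \<in> {0..1} \<Longrightarrow> b \<in> {0..1} \<Longrightarrow>
               \<bar>m_alpha p \<alpha> a b - max a b\<bar> \<le> (1/2) ^ \<alpha>"
    and hne: "blks \<noteq> []"
    and hwf: "wf_model d blks"
  shows "\<exists>C::real. \<forall>\<alpha>::nat. \<forall>x::real list.
           \<alpha> \<ge> 4 \<longrightarrow> length x = d \<longrightarrow>
           (\<forall>j<length blks. linf (eval_model (take j blks) x) \<le> B
                            \<and> linf (eval_model_approx p \<alpha> B (take j blks) x) \<le> B) \<longrightarrow>
           linf (map2 (-) (eval_model_approx p \<alpha> B blks x) (eval_model blks x)) \<le> C * (1/2) ^ \<alpha>"
proof -
  obtain K C where KC: "0 \<le> K" "0 \<le> C" and h: "\<forall>\<alpha> x x'. 4 \<le> \<alpha> \<longrightarrow> length x = d \<longrightarrow> length x' = d \<longrightarrow>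
     (\<forall>j<length blks. linf (eval_model (take j blks) x) \<le> B \<and> linf (eval_model_approx p \<alpha> B (take j blks) x') \<le> B) \<longrightarrow>
     linf (map2 (-) (eval_model_approx p \<alpha> B blks x') (eval_model blks x)) \<le> K * linf (map2 (-) x' x) + C * (1/2)^\<alpha>"
    using model_err[OF hp hB hwf] by blast
  show ?thesis
  proof (intro exI allI impI)
    fix \<alpha> :: nat and x :: "real list"
    assume "4 \<le> \<alpha>" "length x = d"
      "\<forall>j<length blks. linf (eval_model (take j blks) x) \<le> B \<and> linf (eval_model_approx p \<alpha> B (take j blks) x) \<le> B"
    then show "linf (map2 (-) (eval_model_approx p \<alpha> B blks x) (eval_model blks x)) \<le> C * (1/2)^\<alpha>"
      using h[rule_format, of \<alpha> x x] linf_self[of x] by simp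
  qed
qed

end
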